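(* Let $G$ be a torsionless abelian group that binds some subgroup of infinite rank. Then there is a surjective homomorphism from $G$ onto a subgroup $G'$ of $\mathbb{Z}^{\omega}$ such that the subgroup $G'+\mathbb{Z}^{(\omega)}$ of $\mathbb{Z}^\omega$ binds $\mathbb{Z}^{(\omega)}$.
   Context: All groups are abelian. $\mathbb{Z}^{\omega}$ is the product of countably many copies of $\mathbb{Z}$, and $\mathbb{Z}^{(\omega)}\subseteq\mathbb{Z}^\omega$ is the subgroup of sequences with only finitely many nonzero entries. A group is torsionless if it embeds in $\mathbb{Z}^I$ for some set $I$. Rank means torsion-free rank. A group $G$ binds a subgroup $H$ if every homomorphism from $G$ to a free abelian group maps $H$ into a group of finite rank. *)

theory Defs
  imports "HOL-Algebra.Algebra"
begin

text \<open>Abelian groups are HOL-Algebra commutative groups (written multiplicatively).\<close>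

definition Zprod :: "'x set \<Rightarrow> ('x \<Rightarrow> int) monoid" where
  "Zprod I = \<lparr> carrier = {f. \<forall>i. i \<notin> I \<longrightarrow> f i = 0},
              monoid.mult = (\<lambda>f g i. f i + g i), monoid.one = (\<lambda>i. 0) \<rparr>"

definition Zfree :: "'x set \<Rightarrow> ('x \<Rightarrow> int) monoid" where
  "Zfree J = \<lparr> carrier = {f. finite {i. f i \<noteq> 0} \<and> (\<forall>i. i \<notin> J \<longrightarrow> f i = 0)},
              monoid.mult = (\<lambda>f g i. f i + g i), monoid.one = (\<lambda>i. 0) \<rparr>"

abbreviation Zomega :: "(nat \<Rightarrow> int) monoid" where
  "Zomega \<equiv> Zprod (UNIV :: nat set)"

abbreviation Zomega_fin :: "(nat \<Rightarrow> int) set" where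
  "Zomega_fin \<equiv> carrier (Zfree (UNIV :: nat set))"

text \<open>Torsionless: embeds into some Z^I (an index set of size at most |G| always suffices).\<close>
definition torsionless :: "('a, 'b) monoid_scheme \<Rightarrow> bool" where
  "torsionless G \<longleftrightarrow> (\<exists>(I :: 'a set) h. h \<in> hom G (Zprod I) \<and> inj_on h (carrier G))"

definition lin_indep :: "('a, 'b) monoid_scheme \<Rightarrow> 'a set \<Rightarrow> bool" where
  "lin_indep G S \<longleftrightarrow> S \<subseteq> carrier G \<and>
     (\<forall>c :: 'a \<Rightarrow> int. finprod G (\<lambda>s. pow G s (c s)) S = one G \<longrightarrow> (\<forall>s\<in>S. c s = 0))"

definition finite_rank :: "('a, 'b) monoid_scheme \<Rightarrow> 'a set \<Rightarrow> bool" where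
  "finite_rank G Y \<longleftrightarrow> (\<exists>n::nat. \<forall>S. S \<subseteq> Y \<and> finite S \<and> lin_indep G S \<longrightarrow> card S \<le> n)"

text \<open>Free abelian groups are represented as Z^(J); basis sets J of the element type
  of G suffice, since the image of G is free of rank at most |G|.\<close>
definition binds :: "('a, 'b) monoid_scheme \<Rightarrow> 'a set \<Rightarrow> bool" where
  "binds G H \<longleftrightarrow> (\<forall>(J :: 'a set) h. h \<in> hom G (Zfree J) \<longrightarrow> finite_rank (Zfree J) (h ` H))"

end

theory Submission
  imports Defs "HOL-Library.Countable_Set"
begin

locale ptw =
  fixes M :: "('x \<Rightarrow> int) monoid"
  assumes cg: "comm_group M"
    and mult_eq: "\<And>f g. f \<otimes>\<^bsub>M\<^esub> g = (\<lambda>i. f i + g i)"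
    and one_eq: "\<one>\<^bsub>M\<^esub> = (\<lambda>i. 0)"
    and neg_closed: "\<And>x. x \<in> carrier M \<Longrightarrow> (\<lambda>i. - x i) \<in> carrier M"
begin

lemma inv_eq: "x \<in> carrier M \<Longrightarrow> inv\<^bsub>M\<^esub> x = (\<lambda>i. - x i)"
  using group.inv_equality[of M "(\<lambda>i. - x i)" x] cg neg_closed
  by (simp add: comm_group.axioms(2) mult_eq one_eq)

lemma nat_pow_eq: "x \<in> carrier M \<Longrightarrow> x [^]\<^bsub>M\<^esub> (n::nat) = (\<lambda>i. int n * x i)"
proof (induction n)
  case 0
  then show ?case by (simp only: nat_pow_0 one_eq) simp
next
  case (Suc n)
  have "x [^]\<^bsub>M\<^esub> (Suc n) = x [^]\<^bsub>M\<^esub> n \<otimes>\<^bsub>M\<^esub> x" by (rule nat_pow_Suc)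
  also have "\<dots> = (\<lambda>i. int n * x i + x i)" using Suc by (simp only: mult_eq)
  finally show ?case by (simp add: algebra_simps)
qed

lemma int_pow_eq: "x \<in> carrier M \<Longrightarrow> x [^]\<^bsub>M\<^esub> (k::int) = (\<lambda>i. k * x i)"
proof -
  assume x: "x \<in> carrier M"
  have g: "group M" using cg by (rule comm_group.axioms(2))
  have cl: "x [^]\<^bsub>M\<^esub> (n::nat) \<in> carrier M" for n
    by (rule monoid.nat_pow_closed[OF group.axioms(1)[OF g] x])
  show ?thesis
  proof (cases "k < 0")
    case True
    then have "x [^]\<^bsub>M\<^esub> k = inv\<^bsub>M\<^esub> (x [^]\<^bsub>M\<^esub> nat (-k))"
      by (simp only: int_pow_def2 if_True)
    also have "\<dots> = (\<lambda>i. - (int (nat (-k)) * x i))"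
      using cl[of "nat (-k)"] x by (simp only: inv_eq nat_pow_eq)
    finally show ?thesis using True by simp
  next
    case False
    then have "x [^]\<^bsub>M\<^esub> k = x [^]\<^bsub>M\<^esub> nat k"
      by (simp only: int_pow_def2 if_False)
    also have "\<dots> = (\<lambda>i. int (nat k) * x i)"
      using x by (simp only: nat_pow_eq)
    finally show ?thesis using False by simp
  qed
qed

lemma finprod_eq:
  assumes "finite S" "S \<subseteq> carrier M"
  shows "finprod M (\<lambda>s. s [^]\<^bsub>M\<^esub> (c s :: int)) S = (\<lambda>i. \<Sum>s\<in>S. c s * s i)"
  using assms
proof (induction S rule: finite_induct)
  case empty
  have cm: "comm_monoid M" using cg by (rule comm_group.axioms(1))
  show ?case by (simp add: comm_monoid.finprod_empty[OF cm] one_eq)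
next
  case (insert a F)
  have cm: "comm_monoid M" using cg by (rule comm_group.axioms(1))
  have g: "group M" using cg by (rule comm_group.axioms(2))
  have cl: "\<And>s. s \<in> carrier M \<Longrightarrow> s [^]\<^bsub>M\<^esub> (c s) \<in> carrier M"
    by (rule group.int_pow_closed[OF g])
  have "finprod M (\<lambda>s. s [^]\<^bsub>M\<^esub> (c s)) (insert a F) =
        a [^]\<^bsub>M\<^esub> (c a) \<otimes>\<^bsub>M\<^esub> finprod M (\<lambda>s. s [^]\<^bsub>M\<^esub> (c s)) F"
    using insert cl by (intro comm_monoid.finprod_insert[OF cm]) auto
  then show ?case using insert by (simp add: int_pow_eq mult_eq)
qed

lemma lin_indep_iff:
  assumes "finite S"
  shows "lin_indep M S \<longleftrightarrow> S \<subseteq> carrier M \<and>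
     (\<forall>c. (\<lambda>i. \<Sum>s\<in>S. c s * s i) = (\<lambda>i. 0) \<longrightarrow> (\<forall>s\<in>S. c s = 0))"
  using assms finprod_eq by (auto simp: lin_indep_def one_eq)

end

lemma Zprod_simps[simp]: "carrier (Zprod I) = {f. \<forall>i. i \<notin> I \<longrightarrow> f i = 0}"
  "f \<otimes>\<^bsub>Zprod I\<^esub> g = (\<lambda>i. f i + g i)" "\<one>\<^bsub>Zprod I\<^esub> = (\<lambda>i. 0)"
  by (simp_all add: Zprod_def)

lemma Zfree_simps[simp]: "carrier (Zfree I) = {f. finite {i. f i \<noteq> 0} \<and> (\<forall>i. i \<notin> I \<longrightarrow> f i = 0)}"
  "f \<otimes>\<^bsub>Zfree I\<^esub> g = (\<lambda>i. f i + g i)" "\<one>\<^bsub>Zfree I\<^esub> = (\<lambda>i. 0)"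
  by (simp_all add: Zfree_def)

lemma ptw_Zprod: "ptw (Zprod I)"
proof (rule ptw.intro)
  show "comm_group (Zprod I)"
    apply (rule comm_groupI)
         apply auto
    subgoal for x by (rule exI[of _ "\<lambda>i. - x i"]) auto
    done
qed auto

lemma ptw_Zfree: "ptw (Zfree I)"
proof (rule ptw.intro)
  show "comm_group (Zfree I)"
    apply (rule comm_groupI)
    subgoal for x y
      by (simp, rule finite_subset[of "{i. x i + y i \<noteq> 0}" "{i. x i \<noteq> 0} \<union> {i. y i \<noteq> 0}"]) auto
        apply auto
    subgoal for x by (rule exI[of _ "\<lambda>i. - x i"]) auto
    done
qed auto

definition findep :: "'t set \<Rightarrow> ('t \<Rightarrow> 'x \<Rightarrow> int) \<Rightarrow> bool" where
  "findep T g \<longleftrightarrow> (\<forall>c. (\<lambda>i. \<Sum>t\<in>T. c t * g t i) = (\<lambda>i. 0) \<longrightarrow> (\<forall>t\<in>T. c t = 0))"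

definition cindep :: "('x \<Rightarrow> int) set \<Rightarrow> bool" where
  "cindep S \<longleftrightarrow> findep S id"

definition inf_rank :: "('x \<Rightarrow> int) set \<Rightarrow> bool" where
  "inf_rank B \<longleftrightarrow> (\<forall>n. \<exists>S. S \<subseteq> B \<and> finite S \<and> cindep S \<and> card S > n)"

definition closedB :: "('x \<Rightarrow> int) set \<Rightarrow> bool" where
  "closedB B \<longleftrightarrow> (\<lambda>i. 0) \<in> B \<and> (\<forall>u\<in>B. \<forall>v\<in>B. \<forall>a b. (\<lambda>i. a * u i + b * v i) \<in> B)"

definition lin :: "(('x \<Rightarrow> int) \<Rightarrow> int) \<Rightarrow> bool" where
  "lin F \<longleftrightarrow> (\<forall>a b u v. F (\<lambda>i. a * u i + b * v i) = a * F u + b * F v)"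

lemma findep_image:
  assumes "finite T" "findep T g"
  shows "inj_on g T" "cindep (g ` T)"
proof -
  show inj: "inj_on g T"
  proof (rule inj_onI, rule ccontr)
    fix t t' assume tt: "t \<in> T" "t' \<in> T" "g t = g t'" "t \<noteq> t'"
    define c where "c = (\<lambda>s. if s = t then 1 else if s = t' then -1 else (0::int))"
    have "(\<Sum>s\<in>T. c s * g s i) = (\<Sum>s\<in>{t,t'}. c s * g s i)" for i
      by (rule sum.mono_neutral_right) (use assms tt in \<open>auto simp: c_def\<close>)
    then have "(\<lambda>i. \<Sum>s\<in>T. c s * g s i) = (\<lambda>i. 0)"
      using tt by (auto simp: c_def)
    then have "c t = 0" using assms(2) tt unfolding findep_def by blast
    then show False by (simp add: c_def)
  qed
  show "cindep (g ` T)"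
    unfolding cindep_def findep_def
  proof (intro allI impI ballI)
    fix c s assume h: "(\<lambda>i. \<Sum>t\<in>g ` T. c t * id t i) = (\<lambda>i. 0)" and s: "s \<in> g ` T"
    have "(\<lambda>i. \<Sum>t\<in>T. (c \<circ> g) t * g t i) = (\<lambda>i. 0)"
      using h by (simp add: sum.reindex[OF inj])
    then have "\<forall>t\<in>T. (c \<circ> g) t = 0" using assms(2) unfolding findep_def by blast
    then show "c s = 0" using s by auto
  qed
qed

lemma linD: "lin F \<Longrightarrow> F (\<lambda>i. a * u i + b * v i) = a * F u + b * F v"
  unfolding lin_def by blast

lemma closedBD: "closedB B \<Longrightarrow> u \<in> B \<Longrightarrow> v \<in> B \<Longrightarrow> (\<lambda>i. a * u i + b * v i) \<in> B"
  unfolding closedB_def by blast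

lemma closedB0: "closedB B \<Longrightarrow> (\<lambda>i. 0) \<in> B"
  unfolding closedB_def by blast

lemma lin_zero: "lin F \<Longrightarrow> F (\<lambda>i. 0) = 0"
  using linD[of F 0 "\<lambda>i. 0" 0 "\<lambda>i. 0"] by simp

lemma lin_sum:
  assumes "lin F"
  shows "F (\<lambda>i. \<Sum>t\<in>T. c t * g t i) = (\<Sum>t\<in>T. c t * F (g t))"
proof (cases "finite T")
  case True
  then show ?thesis
  proof (induction T rule: finite_induct)
    case empty
    then show ?case using lin_zero[OF assms] by simp
  next
    case (insert a T)
    have "F (\<lambda>i. \<Sum>t\<in>insert a T. c t * g t i) =
          F (\<lambda>i. c a * g a i + 1 * (\<Sum>t\<in>T. c t * g t i))"
      using insert by simp
    also have "\<dots> = c a * F (g a) + 1 * F (\<lambda>i. \<Sum>t\<in>T. c t * g t i)"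
      by (rule linD[OF assms])
    finally show ?case using insert by simp
  qed
next
  case False
  then show ?thesis using lin_zero[OF assms] by simp
qed

lemma closedB_sum:
  assumes "closedB B" "g ` T \<subseteq> B"
  shows "(\<lambda>i. \<Sum>t\<in>T. c t * g t i) \<in> B"
proof (cases "finite T")
  case True
  then show ?thesis using assms(2)
  proof (induction T rule: finite_induct)
    case empty
    then show ?case using closedB0[OF assms(1)] by simp
  next
    case (insert a T)
    have "(\<lambda>i. c a * g a i + 1 * (\<Sum>t\<in>T. c t * g t i)) \<in> B"
      using insert by (intro closedBD[OF assms(1)]) auto
    then show ?case using insert by simp
  qed
next
  case False
  then show ?thesis using closedB0[OF assms(1)] by simp
qed

lemma closedB_ker:
  assumes "closedB B" "lin F"
  shows "closedB (B \<inter> {v. F v = 0})"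
  using assms lin_zero[OF assms(2)] unfolding closedB_def lin_def by auto

lemma inf_rank_ker:
  assumes cl: "closedB B" and F: "lin F" and ir: "inf_rank B"
  shows "inf_rank (B \<inter> {v. F v = 0})"
  unfolding inf_rank_def
proof
  fix n
  obtain S where S: "S \<subseteq> B" "finite S" "cindep S" "card S > Suc n"
    using ir unfolding inf_rank_def by blast
  show "\<exists>S. S \<subseteq> B \<inter> {v. F v = 0} \<and> finite S \<and> cindep S \<and> n < card S"
  proof (cases "\<forall>s\<in>S. F s = 0")
    case True
    then show ?thesis using S by (intro exI[of _ S]) auto
  next
    case False
    then obtain s0 where s0: "s0 \<in> S" "F s0 \<noteq> 0" by blast
    define T where "T = S - {s0}"
    define g where "g = (\<lambda>t i. F s0 * t i + (- F t) * s0 i)"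
    have fT: "finite T" using S T_def by auto
    have gB: "g ` T \<subseteq> B \<inter> {v. F v = 0}"
    proof
      fix w assume "w \<in> g ` T"
      then obtain t where t: "t \<in> T" "w = g t" by blast
      have "w \<in> B" unfolding t g_def using t S s0 unfolding T_def by (intro closedBD[OF cl]) auto
      moreover have "F w = 0" using linD[OF F, of "F s0" t "- F t" s0] unfolding t g_def
        by (simp add: algebra_simps)
      ultimately show "w \<in> B \<inter> {v. F v = 0}" by simp
    qed
    have fi: "findep T g"
      unfolding findep_def
    proof (intro allI impI ballI)
      fix c t assume h: "(\<lambda>i. \<Sum>t\<in>T. c t * g t i) = (\<lambda>i. 0)" and t: "t \<in> T"
      define c' where "c' = (\<lambda>s. if s = s0 then - (\<Sum>t\<in>T. c t * F t) else c s * F s0)"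
      have "(\<Sum>s\<in>S. c' s * s i) = 0" for i
      proof -
        have S_eq: "S = insert s0 T" using s0 T_def by auto
        have "(\<Sum>s\<in>S. c' s * s i) = c' s0 * s0 i + (\<Sum>s\<in>T. c' s * s i)"
          using s0(1) S(2) unfolding T_def by (rule_tac sum.remove) auto
        also have "(\<Sum>s\<in>T. c' s * s i) = (\<Sum>s\<in>T. c s * F s0 * s i)"
          by (rule sum.cong) (auto simp: c'_def T_def)
        also have "c' s0 * s0 i + (\<Sum>s\<in>T. c s * F s0 * s i) = (\<Sum>t\<in>T. c t * g t i)"
          by (simp add: c'_def g_def algebra_simps sum.distrib sum_distrib_left sum_distrib_right
              sum_negf sum_subtractf)
        also have "\<dots> = 0" using h by meson
        finally show ?thesis .
      qed
      then have "(\<lambda>i. \<Sum>s\<in>S. c' s * id s i) = (\<lambda>i. 0)" by auto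
      then have "c' t = 0" using S(3) t unfolding cindep_def findep_def T_def by blast
      then show "c t = 0" using t s0 by (simp add: c'_def T_def)
    qed
    have "card (g ` T) = card T" using findep_image(1)[OF fT fi] by (simp add: card_image)
    moreover have "card T = card S - 1" using s0 S unfolding T_def by simp
    ultimately show ?thesis using gB fT fi findep_image(2)[OF fT fi] S(4)
      by (intro exI[of _ "g ` T"]) auto
  qed
qed

lemma inf_rank_kers:
  fixes n :: nat
  assumes cl: "closedB B" and F: "\<forall>k<n. lin (F k)" and ir: "inf_rank B"
  shows "inf_rank (B \<inter> {v. \<forall>k<n. F k v = 0}) \<and> closedB (B \<inter> {v. \<forall>k<n. F k v = 0})"
  using F
proof (induction n)
  case 0
  then show ?case using cl ir by simp
next
  case (Suc n)
  have eq: "B \<inter> {v. \<forall>k<Suc n. F k v = 0} = (B \<inter> {v. \<forall>k<n. F k v = 0}) \<inter> {v. F n v = 0}"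
    by (auto simp: less_Suc_eq)
  have IH: "inf_rank (B \<inter> {v. \<forall>k<n. F k v = 0})" "closedB (B \<inter> {v. \<forall>k<n. F k v = 0})"
    using Suc by auto
  have Fn: "lin (F n)" using Suc.prems by simp
  show ?case unfolding eq using inf_rank_ker[OF IH(2) Fn IH(1)] closedB_ker[OF IH(2) Fn] by simp
qed

lemma inf_rank_nonzero:
  assumes "inf_rank B"
  shows "\<exists>v\<in>B. v \<noteq> (\<lambda>i. 0)"
proof -
  obtain S where S: "S \<subseteq> B" "finite S" "cindep S" "card S > 0"
    using assms unfolding inf_rank_def by blast
  then obtain s where s: "s \<in> S" by fastforce
  have "s \<noteq> (\<lambda>i. 0)"
  proof
    assume s0: "s = (\<lambda>i. 0)"
    define c where "c = (\<lambda>x. if x = s then 1 else (0::int))"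
    have "(\<Sum>x\<in>S. c x * id x i) = (\<Sum>x\<in>{s}. c x * id x i)" for i
      by (rule sum.mono_neutral_right) (use S s in \<open>auto simp: c_def\<close>)
    then have "(\<lambda>i. \<Sum>x\<in>S. c x * id x i) = (\<lambda>i. 0)" using s0 by (auto simp: c_def)
    then have "c s = 0" using S(3) s unfolding cindep_def findep_def by blast
    then show False by (simp add: c_def)
  qed
  then show ?thesis using s S by blast
qed

definition Inv :: "('x \<Rightarrow> int) set \<Rightarrow> nat \<Rightarrow> (nat \<Rightarrow> 'x \<Rightarrow> int) \<Rightarrow> (nat \<Rightarrow> ('x \<Rightarrow> int) \<Rightarrow> int) \<Rightarrow> bool" where
  "Inv B n x F \<longleftrightarrow> (\<forall>k<n. x k \<in> B \<and> lin (F k) \<and> F k (x k) \<noteq> 0) \<and>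
      (\<forall>k<n. \<forall>j<n. j \<noteq> k \<longrightarrow> F k (x j) = 0)"

lemma InvD1: "Inv B n x F \<Longrightarrow> k < n \<Longrightarrow> x k \<in> B \<and> lin (F k) \<and> F k (x k) \<noteq> 0"
  unfolding Inv_def by blast

lemma InvD2: "Inv B n x F \<Longrightarrow> k < n \<Longrightarrow> j < n \<Longrightarrow> j \<noteq> k \<Longrightarrow> F k (x j) = 0"
  unfolding Inv_def by blast

primrec Gs :: "(nat \<Rightarrow> 'x \<Rightarrow> int) \<Rightarrow> (nat \<Rightarrow> ('x \<Rightarrow> int) \<Rightarrow> int) \<Rightarrow> 'x \<Rightarrow> nat \<Rightarrow> ('x \<Rightarrow> int) \<Rightarrow> int" where
  "Gs x F i 0 = (\<lambda>u. u i)"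
| "Gs x F i (Suc k) = (\<lambda>u. F k (x k) * Gs x F i k u - Gs x F i k (x k) * F k u)"

lemma lin_proj: "lin (\<lambda>u. u i)"
  unfolding lin_def by simp

lemma lin_comb: "lin G \<Longrightarrow> lin F \<Longrightarrow> lin (\<lambda>u. a * G u - c * F u)"
  unfolding lin_def by (simp add: algebra_simps)

lemma Gs_props:
  assumes "Inv B n x F" "\<forall>k<n. F k v = 0" "v i \<noteq> 0" "k \<le> n"
  shows "lin (Gs x F i k) \<and> (\<forall>j<k. Gs x F i k (x j) = 0) \<and> Gs x F i k v \<noteq> 0"
  using assms(4)
proof (induction k)
  case 0
  then show ?case using lin_proj assms(3) by simp
next
  case (Suc k)
  then have IH: "lin (Gs x F i k)" "\<forall>j<k. Gs x F i k (x j) = 0" "Gs x F i k v \<noteq> 0" and kn: "k < n"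
    by auto
  have Fk: "lin (F k)" "F k (x k) \<noteq> 0" "F k v = 0" using assms(1,2) kn unfolding Inv_def by auto
  have orth: "\<forall>j<k. F k (x j) = 0" using assms(1) kn unfolding Inv_def by auto
  have "lin (Gs x F i (Suc k))" using lin_comb[OF IH(1) Fk(1)] by simp
  moreover have "\<forall>j<Suc k. Gs x F i (Suc k) (x j) = 0"
    using IH(2) orth by (auto simp: less_Suc_eq)
  moreover have "Gs x F i (Suc k) v \<noteq> 0" using IH(3) Fk(2,3) by simp
  ultimately show ?case by blast
qed

lemma Inv_extend:
  assumes cl: "closedB B" and ir: "inf_rank B" and I: "Inv B n x F"
  shows "\<exists>v G. Inv B (Suc n) (x(n := v)) (F(n := G))"
proof -
  have linF: "\<forall>k<n. lin (F k)" using I unfolding Inv_def by blast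
  obtain v where v: "v \<in> B \<inter> {v. \<forall>k<n. F k v = 0}" "v \<noteq> (\<lambda>i. 0)"
    using inf_rank_nonzero conjunct1[OF inf_rank_kers[OF cl linF ir]] by blast
  then obtain i where i: "v i \<noteq> 0" by auto
  have G: "lin (Gs x F i n)" "\<forall>j<n. Gs x F i n (x j) = 0" "Gs x F i n v \<noteq> 0"
    using Gs_props[of B n x F v i n] I i v by auto
  have "Inv B (Suc n) (x(n := v)) (F(n := Gs x F i n))"
    using I v G unfolding Inv_def by (auto simp: less_Suc_eq)
  then show ?thesis by blast
qed

lemma biorth_seq:
  assumes cl: "closedB B" and ir: "inf_rank B"
  shows "\<exists>x F. \<forall>k::nat. x k \<in> B \<and> lin (F k) \<and> F k (x k) \<noteq> 0 \<and> (\<forall>j. j \<noteq> k \<longrightarrow> F k (x j) = 0)"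
proof -
  let ?P = "\<lambda>n s. Inv B n (fst s) (snd s)"
  let ?Q = "\<lambda>n s s'. \<forall>k<n. fst s' k = fst s k \<and> snd s' k = snd s k"
  have "\<exists>f. \<forall>n. ?P n (f n) \<and> ?Q n (f n) (f (Suc n))"
  proof (rule dependent_nat_choice)
    show "\<exists>s. ?P 0 s" by (simp add: Inv_def)
  next
    fix s n assume "?P n s"
    then obtain v G where "Inv B (Suc n) ((fst s)(n := v)) ((snd s)(n := G))"
      using Inv_extend[OF cl ir] by blast
    then show "\<exists>s'. ?P (Suc n) s' \<and> ?Q n s s'"
      by (intro exI[of _ "((fst s)(n := v), (snd s)(n := G))"]) auto
  qed
  then obtain f where f: "\<And>n. ?P n (f n)" "\<And>n. ?Q n (f n) (f (Suc n))" by blast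
  define XX where "XX k = fst (f (Suc k)) k" for k
  define YY where "YY k = snd (f (Suc k)) k" for k
  have stab: "fst (f (Suc k + d)) k = XX k \<and> snd (f (Suc k + d)) k = YY k" for k d
  proof (induction d)
    case 0
    then show ?case by (simp add: XX_def YY_def)
  next
    case (Suc d)
    have "k < Suc k + d" by simp
    then show ?case using f(2)[of "Suc k + d"] Suc by simp
  qed
  have stab2: "k < m \<Longrightarrow> fst (f m) k = XX k \<and> snd (f m) k = YY k" for k m
    using stab[of k "m - Suc k"] by simp
  have I: "Inv B n XX YY" for n
    using f(1)[of n] stab2[of _ n] unfolding Inv_def by auto
  have "\<forall>k. XX k \<in> B \<and> lin (YY k) \<and> YY k (XX k) \<noteq> 0 \<and> (\<forall>j. j \<noteq> k \<longrightarrow> YY k (XX j) = 0)"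
  proof (intro allI conjI impI)
    fix k
    show "XX k \<in> B" "lin (YY k)" "YY k (XX k) \<noteq> 0" using InvD1[OF I[of "Suc k"], of k] by auto
    fix j assume "j \<noteq> k"
    then show "YY k (XX j) = 0" using InvD2[OF I[of "Suc (j + k)"], of k j] by auto
  qed
  note H = this
  show ?thesis by (intro exI[where x=XX] exI[where x=YY]) (rule H)
qed

locale tsetup =
  fixes G :: "('a, 'b) monoid_scheme" and I :: "'c set" and e :: "'a \<Rightarrow> 'c \<Rightarrow> int" and H :: "'a set"
  assumes cg: "comm_group G" and eh: "e \<in> hom G (Zprod I)" and einj: "inj_on e (carrier G)"
    and sg: "subgroup H G"
begin

lemma gG: "group G" using cg by (rule comm_group.axioms(2))
lemma gZ: "group (Zprod I)" using ptw.cg[OF ptw_Zprod] by (rule comm_group.axioms(2))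

lemma e_mult: "g \<in> carrier G \<Longrightarrow> h \<in> carrier G \<Longrightarrow> e (g \<otimes>\<^bsub>G\<^esub> h) = (\<lambda>i. e g i + e h i)"
  using hom_mult[OF eh] by simp

lemma e_one: "e \<one>\<^bsub>G\<^esub> = (\<lambda>i. 0)"
  using hom_one[OF eh gG gZ] by simp

lemma e_carrier: "g \<in> carrier G \<Longrightarrow> e g \<in> carrier (Zprod I)"
  using eh unfolding hom_def by blast

lemma e_pow: "g \<in> carrier G \<Longrightarrow> e (g [^]\<^bsub>G\<^esub> (k::int)) = (\<lambda>i. k * e g i)"
  using hom_int_pow[OF eh _ gG gZ] ptw.int_pow_eq[OF ptw_Zprod e_carrier] by simp

lemma e_finprod:
  assumes "finite S" "S \<subseteq> carrier G"
  shows "e (finprod G (\<lambda>s. s [^]\<^bsub>G\<^esub> (c s :: int)) S) = (\<lambda>i. \<Sum>s\<in>S. c s * e s i)"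
  using assms
proof (induction S rule: finite_induct)
  case empty
  have cm: "comm_monoid G" using cg by (rule comm_group.axioms(1))
  show ?case by (simp add: comm_monoid.finprod_empty[OF cm] e_one)
next
  case (insert a F)
  have cm: "comm_monoid G" using cg by (rule comm_group.axioms(1))
  have cl: "\<And>s. s \<in> carrier G \<Longrightarrow> s [^]\<^bsub>G\<^esub> (c s) \<in> carrier G"
    by (rule group.int_pow_closed[OF gG])
  have fc: "finprod G (\<lambda>s. s [^]\<^bsub>G\<^esub> (c s)) F \<in> carrier G"
    using insert cl by (intro comm_monoid.finprod_closed[OF cm]) auto
  have "finprod G (\<lambda>s. s [^]\<^bsub>G\<^esub> (c s)) (insert a F) =
        a [^]\<^bsub>G\<^esub> (c a) \<otimes>\<^bsub>G\<^esub> finprod G (\<lambda>s. s [^]\<^bsub>G\<^esub> (c s)) F"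
    using insert cl by (intro comm_monoid.finprod_insert[OF cm]) auto
  then have "e (finprod G (\<lambda>s. s [^]\<^bsub>G\<^esub> (c s)) (insert a F)) =
      (\<lambda>i. e (a [^]\<^bsub>G\<^esub> (c a)) i + e (finprod G (\<lambda>s. s [^]\<^bsub>G\<^esub> (c s)) F) i)"
    using e_mult[OF cl fc] insert by simp
  then show ?case using insert e_pow by simp
qed

lemma H_carrier: "H \<subseteq> carrier G"
  using sg by (rule subgroup.subset)

lemma closedB_H: "closedB (e ` H)"
  unfolding closedB_def
proof (intro conjI ballI allI)
  show "(\<lambda>i. 0) \<in> e ` H"
    using subgroup.one_closed[OF sg] e_one by (metis image_eqI)
next
  fix u v and a b :: int assume u: "u \<in> e ` H" and v: "v \<in> e ` H"
  then obtain g h where gh: "g \<in> H" "h \<in> H" "u = e g" "v = e h" by blast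
  have p: "g [^]\<^bsub>G\<^esub> a \<in> H" "h [^]\<^bsub>G\<^esub> b \<in> H"
    using group.subgroup_int_pow_closed[OF gG sg gh(1), of a] group.subgroup_int_pow_closed[OF gG sg gh(2), of b] by auto
  have m: "g [^]\<^bsub>G\<^esub> a \<otimes>\<^bsub>G\<^esub> h [^]\<^bsub>G\<^esub> b \<in> H"
    using subgroup.m_closed[OF sg p] .
  have "e (g [^]\<^bsub>G\<^esub> a \<otimes>\<^bsub>G\<^esub> h [^]\<^bsub>G\<^esub> b) = (\<lambda>i. a * u i + b * v i)"
  proof -
    have gc: "g \<in> carrier G" "h \<in> carrier G" using gh H_carrier by auto
    show ?thesis using p H_carrier gh by (subst e_mult) (auto simp: e_pow[OF gc(1)] e_pow[OF gc(2)])
  qed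
  then show "(\<lambda>i. a * u i + b * v i) \<in> e ` H" using m by (metis image_eqI)
qed

lemma inf_rank_H:
  assumes "\<not> finite_rank G H"
  shows "inf_rank (e ` H)"
  unfolding inf_rank_def
proof
  fix n
  obtain S where S: "S \<subseteq> H" "finite S" "lin_indep G S" "\<not> card S \<le> n"
    using assms unfolding finite_rank_def by blast
  have Sc: "S \<subseteq> carrier G" using S H_carrier by blast
  have fi: "findep S e"
    unfolding findep_def
  proof (intro allI impI)
    fix c assume h: "(\<lambda>i. \<Sum>t\<in>S. c t * e t i) = (\<lambda>i. 0)"
    have cm: "comm_monoid G" using cg by (rule comm_group.axioms(1))
    have cl: "finprod G (\<lambda>s. s [^]\<^bsub>G\<^esub> (c s)) S \<in> carrier G"
      using Sc by (intro comm_monoid.finprod_closed[OF cm]) (auto intro: group.int_pow_closed[OF gG])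
    have "e (finprod G (\<lambda>s. s [^]\<^bsub>G\<^esub> (c s)) S) = e \<one>\<^bsub>G\<^esub>"
      using e_finprod[OF S(2) Sc] h e_one by simp
    then have "finprod G (\<lambda>s. s [^]\<^bsub>G\<^esub> (c s)) S = \<one>\<^bsub>G\<^esub>"
      using einj cl monoid.one_closed[OF group.axioms(1)[OF gG]] by (meson inj_onD)
    then show "\<forall>t\<in>S. c t = 0" using S(3) unfolding lin_indep_def by blast
  qed
  have "card (e ` S) = card S" using findep_image(1)[OF S(2) fi] by (simp add: card_image)
  then show "\<exists>S'. S' \<subseteq> e ` H \<and> finite S' \<and> cindep S' \<and> n < card S'"
    using findep_image(2)[OF S(2) fi] S by (intro exI[of _ "e ` S"]) auto
qed

end

lemma countable_fin: "countable Zomega_fin"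
proof (rule countable_subset)
  show "Zomega_fin \<subseteq> range (\<lambda>l::int list. \<lambda>n. if n < length l then l ! n else 0)"
  proof
    fix z assume "z \<in> Zomega_fin"
    then have "finite {i. z i \<noteq> 0}" by simp
    then obtain N where N: "{i. z i \<noteq> 0} \<subseteq> {..<N}" using finite_nat_bounded by blast
    have "z = (\<lambda>n. if n < length (map z [0..<N]) then map z [0..<N] ! n else 0)"
      using N by (auto simp: fun_eq_iff)
    then show "z \<in> range (\<lambda>l::int list. \<lambda>n. if n < length l then l ! n else 0)" by blast
  qed
  show "countable (range (\<lambda>l::int list. \<lambda>n. if n < length l then l ! n else (0::int)))" by simp
qed

lemma binds_main:
  fixes G :: "('a, 'b) monoid_scheme" and e :: "'a \<Rightarrow> 'c \<Rightarrow> int"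
    and x :: "nat \<Rightarrow> 'c \<Rightarrow> int" and F :: "nat \<Rightarrow> ('c \<Rightarrow> int) \<Rightarrow> int"
  assumes ts: "tsetup G I e H" and bd: "binds G H" and infa: "infinite (UNIV::'a set)"
    and xF: "\<And>k. x k \<in> e ` H \<and> lin (F k) \<and> F k (x k) \<noteq> 0 \<and> (\<forall>j. j \<noteq> k \<longrightarrow> F k (x j) = 0)"
    and G'def: "G' = (\<lambda>g n. F n (e g)) ` carrier G"
  shows "binds (Zomega\<lparr>carrier := G' <#>\<^bsub>Zomega\<^esub> Zomega_fin\<rparr>) Zomega_fin"
  unfolding binds_def
proof (intro allI impI)
  fix J' :: "(nat \<Rightarrow> int) set" and \<phi>
  let ?K = "Zomega\<lparr>carrier := G' <#>\<^bsub>Zomega\<^esub> Zomega_fin\<rparr>"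
  assume ph: "\<phi> \<in> hom ?K (Zfree J')"
  interpret tsetup G I e H by (rule ts)
  define f where "f = (\<lambda>g n. F n (e g))"
  have linF: "\<And>n. lin (F n)" using xF by blast
  have carK: "carrier ?K = {w. \<exists>a\<in>G'. \<exists>b\<in>Zomega_fin. w = (\<lambda>n. a n + b n)}"
    by (auto simp: set_mult_def)
  have multK: "\<And>a b. a \<otimes>\<^bsub>?K\<^esub> b = (\<lambda>n. a n + b n)" by simp
  have f1: "f \<one>\<^bsub>G\<^esub> = (\<lambda>n. 0)" using lin_zero[OF linF] by (simp add: f_def e_one)
  have oneG: "\<one>\<^bsub>G\<^esub> \<in> carrier G" by (rule monoid.one_closed[OF group.axioms(1)[OF gG]])
  have zG': "(\<lambda>n. 0) \<in> G'" unfolding G'def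
  proof (rule image_eqI[OF _ oneG])
    show "(\<lambda>n. 0) = (\<lambda>g n. F n (e g)) \<one>\<^bsub>G\<^esub>" by (rule f1[unfolded f_def, symmetric])
  qed
  have finK: "z \<in> carrier ?K" if "finite {i. z i \<noteq> 0}" for z
    unfolding carK
    by (intro CollectI bexI[of _ "\<lambda>n. 0"] bexI[of _ z]) (use zG' that in simp_all)
  have G'K: "a \<in> carrier ?K" if "a \<in> G'" for a
  proof -
    show ?thesis unfolding carK
      by (intro CollectI bexI[of _ a] bexI[of _ "\<lambda>n. 0"]) (use that in simp_all)
  qed
  have phc: "\<And>w. w \<in> carrier ?K \<Longrightarrow> \<phi> w \<in> carrier (Zfree J')" using ph unfolding hom_def by blast
  have phm: "\<And>a b. a \<in> carrier ?K \<Longrightarrow> b \<in> carrier ?K \<Longrightarrow> \<phi> (\<lambda>n. a n + b n) = (\<lambda>j. \<phi> a j + \<phi> b j)"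
    using hom_mult[OF ph] multK by simp
  have phfin: "\<phi> \<in> hom (Zfree UNIV) (Zfree J')"
    unfolding hom_def using phc finK phm by auto
  have gF: "group (Zfree Q)" for Q :: "'z set"
    using ptw.cg[OF ptw_Zfree] by (rule comm_group.axioms(2))
  have phscal: "\<phi> (\<lambda>n. D * z n) = (\<lambda>j. D * \<phi> z j)" if "finite {i. z i \<noteq> 0}" for z D
  proof -
    have zc: "z \<in> carrier (Zfree UNIV)" using that by simp
    have "\<phi> (z [^]\<^bsub>Zfree UNIV\<^esub> D) = \<phi> z [^]\<^bsub>Zfree J'\<^esub> D"
      by (rule hom_int_pow[OF phfin zc gF gF])
    then show ?thesis
      using ptw.int_pow_eq[OF ptw_Zfree zc] ptw.int_pow_eq[OF ptw_Zfree phc[OF finK[OF that]]] by simp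
  qed
  define C where "C = (\<Union>z\<in>Zomega_fin. {j. \<phi> z j \<noteq> 0})"
  have cC: "countable C" unfolding C_def
  proof (rule countable_UN[OF countable_fin])
    fix z assume "z \<in> Zomega_fin"
    then have "\<phi> z \<in> carrier (Zfree J')" using phc finK by simp
    then show "countable {j. \<phi> z j \<noteq> 0}" by (simp add: countable_finite)
  qed
  obtain \<theta>0 :: "nat \<Rightarrow> 'a" where th0: "inj \<theta>0" using infinite_countable_subset[OF infa] by blast
  define \<theta> where "\<theta> = \<theta>0 \<circ> to_nat_on C"
  have inj\<theta>: "inj_on \<theta> C" unfolding \<theta>_def
    using inj_on_to_nat_on[OF cC] th0 by (simp add: comp_inj_on inj_on_subset)
  define \<psi> where "\<psi> = (\<lambda>u::(nat \<Rightarrow> int) \<Rightarrow> int. \<lambda>a. if a \<in> \<theta> ` C then u (inv_into C \<theta> a) else 0)"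
  have \<psi>\<theta>: "\<And>u j. j \<in> C \<Longrightarrow> \<psi> u (\<theta> j) = u j" using inj\<theta> by (simp add: \<psi>_def)
  define P where "P = (\<lambda>g. \<psi> (\<phi> (f g)))"
  have fG': "\<And>g. g \<in> carrier G \<Longrightarrow> f g \<in> G'" unfolding G'def f_def by auto
  have fmult: "\<And>g h. g \<in> carrier G \<Longrightarrow> h \<in> carrier G \<Longrightarrow> f (g \<otimes>\<^bsub>G\<^esub> h) = (\<lambda>n. f g n + f h n)"
    using e_mult linD[OF linF, of _ 1 _ 1] by (simp add: f_def)
  have \<psi>supp: "{a. \<psi> u a \<noteq> 0} \<subseteq> \<theta> ` {j. u j \<noteq> 0}" for u
  proof
    fix a assume "a \<in> {a. \<psi> u a \<noteq> 0}"
    then have a: "a \<in> \<theta> ` C" "u (inv_into C \<theta> a) \<noteq> 0" by (auto simp: \<psi>_def split: if_splits)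
    then obtain j where j: "j \<in> C" "a = \<theta> j" by blast
    then show "a \<in> \<theta> ` {j. u j \<noteq> 0}" using a inj\<theta> by auto
  qed
  have Phom: "P \<in> hom G (Zfree (\<theta> ` C))"
    unfolding hom_def
  proof (intro CollectI conjI ballI funcsetI)
    fix g assume g: "g \<in> carrier G"
    then have "\<phi> (f g) \<in> carrier (Zfree J')" using phc G'K fG' by blast
    then have "finite {j. \<phi> (f g) j \<noteq> 0}" by simp
    then have "finite {a. P g a \<noteq> 0}" unfolding P_def
      using \<psi>supp by (meson finite_imageI finite_subset)
    then show "P g \<in> carrier (Zfree (\<theta> ` C))" by (simp add: P_def \<psi>_def)
  next
    fix g h assume g: "g \<in> carrier G" and h: "h \<in> carrier G"
    have "\<phi> (f (g \<otimes>\<^bsub>G\<^esub> h)) = (\<lambda>j. \<phi> (f g) j + \<phi> (f h) j)"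
      using fmult[OF g h] phm G'K fG' g h by simp
    then show "P (g \<otimes>\<^bsub>G\<^esub> h) = P g \<otimes>\<^bsub>Zfree (\<theta> ` C)\<^esub> P h"
      by (auto simp: P_def \<psi>_def fun_eq_iff)
  qed
  have fr: "finite_rank (Zfree (\<theta> ` C)) (P ` H)"
    using bd[unfolded binds_def, rule_format, OF Phom] .
  then obtain N where N0: "\<forall>S. S \<subseteq> P ` H \<and> finite S \<and> lin_indep (Zfree (\<theta> ` C)) S \<longrightarrow> card S \<le> N"
    unfolding finite_rank_def by (elim exE)
  have N: "\<And>S. S \<subseteq> P ` H \<Longrightarrow> finite S \<Longrightarrow> lin_indep (Zfree (\<theta> ` C)) S \<Longrightarrow> card S \<le> N"
    using N0 by simp
  show "finite_rank (Zfree J') (\<phi> ` Zomega_fin)"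
    unfolding finite_rank_def
  proof (intro exI[of _ N] allI impI)
    fix S assume "S \<subseteq> \<phi> ` Zomega_fin \<and> finite S \<and> lin_indep (Zfree J') S"
    then have S: "S \<subseteq> \<phi> ` Zomega_fin" "finite S" "lin_indep (Zfree J') S" by auto
    have Sind: "\<And>c. (\<lambda>i. \<Sum>s\<in>S. c s * s i) = (\<lambda>i. 0) \<Longrightarrow> \<forall>s\<in>S. c s = 0"
      using ptw.lin_indep_iff[OF ptw_Zfree S(2)] S(3) by blast
    have "\<forall>s\<in>S. \<exists>w. w \<in> Zomega_fin \<and> \<phi> w = s" using S(1) by blast
    then obtain z where z: "\<And>s. s \<in> S \<Longrightarrow> z s \<in> Zomega_fin \<and> \<phi> (z s) = s"
      by metis
    have "finite (\<Union>s\<in>S. {n. z s n \<noteq> 0})" using z S(2) by auto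
    then obtain M where M0: "(\<Union>s\<in>S. {n. z s n \<noteq> 0}) \<subseteq> {..<M}" using finite_nat_bounded by blast
    have M: "\<And>s n. s \<in> S \<Longrightarrow> M \<le> n \<Longrightarrow> z s n = 0" using M0 by fastforce
    define d where "d k = F k (x k)" for k
    define D where "D = (\<Prod>k<M. d k)"
    have D0: "D \<noteq> 0" using xF by (simp add: D_def d_def)
    define q where "q k = D div d k" for k
    have qd: "q k * d k = D" if "k < M" for k
    proof -
      have "d k dvd D" unfolding D_def using that by (intro dvd_prodI) auto
      then show ?thesis by (simp add: q_def)
    qed
    define v where "v s = (\<lambda>i. \<Sum>k\<in>{..<M}. (z s k * q k) * x k i)" for s
    have vB: "v s \<in> e ` H" for s
      unfolding v_def by (rule closedB_sum[OF closedB_H]) (use xF in blast)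
    have "\<forall>s. \<exists>g. g \<in> H \<and> e g = v s"
    proof
      fix s
      from vB[of s] obtain g where "g \<in> H" "v s = e g" by (rule imageE)
      then show "\<exists>g. g \<in> H \<and> e g = v s" by auto
    qed
    then have "\<exists>h. \<forall>s. h s \<in> H \<and> e (h s) = v s" by (rule choice)
    then obtain h where h: "\<And>s. h s \<in> H \<and> e (h s) = v s" by blast
    have fh: "f (h s) = (\<lambda>n. D * z s n)" if s: "s \<in> S" for s
    proof
      fix n
      have "f (h s) n = F n (v s)" using h by (simp add: f_def)
      also have "\<dots> = (\<Sum>k\<in>{..<M}. (z s k * q k) * F n (x k))"
        unfolding v_def by (rule lin_sum[OF linF])
      also have "\<dots> = (\<Sum>k\<in>{..<M}. if k = n then z s k * q k * d k else 0)"
        by (rule sum.cong) (use xF in \<open>auto simp: d_def\<close>)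
      also have "\<dots> = (if n < M then z s n * q n * d n else 0)" by simp
      also have "\<dots> = D * z s n" using qd M[OF s] by (auto simp: not_less)
      finally show "f (h s) n = D * z s n" .
    qed
    define g' where "g' s = \<psi> (\<lambda>j. D * s j)" for s
    have Ph: "P (h s) = g' s" if s: "s \<in> S" for s
    proof -
      have "finite {i. z s i \<noteq> 0}" using z[OF s] by simp
      then show ?thesis using fh[OF s] phscal z[OF s] by (simp add: P_def g'_def)
    qed
    have fi: "findep S g'"
      unfolding findep_def
    proof (intro allI impI)
      fix c assume hc: "(\<lambda>i. \<Sum>t\<in>S. c t * g' t i) = (\<lambda>i. 0)"
      have "(\<Sum>s\<in>S. c s * s j) = 0" for j
      proof (cases "j \<in> C")
        case True
        have "(\<Sum>t\<in>S. c t * g' t (\<theta> j)) = 0" using hc by meson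
        then have "(\<Sum>t\<in>S. c t * (D * t j)) = 0" using \<psi>\<theta>[OF True] by (simp add: g'_def)
        then have "D * (\<Sum>t\<in>S. c t * t j) = 0" by (simp add: sum_distrib_left algebra_simps)
        then show ?thesis using D0 by simp
      next
        case False
        have "s j = 0" if s: "s \<in> S" for s
        proof (rule ccontr)
          assume "s j \<noteq> 0"
          then have "j \<in> C" using z[OF s] unfolding C_def by force
          then show False using False by simp
        qed
        then show ?thesis by (intro sum.neutral) simp
      qed
      then show "\<forall>t\<in>S. c t = 0" using Sind by blast
    qed
    have sub: "g' ` S \<subseteq> P ` H" using Ph h by (metis image_eqI image_subsetI)
    have subc: "g' ` S \<subseteq> carrier (Zfree (\<theta> ` C))"
    proof
      fix w assume "w \<in> g' ` S"
      then obtain s where s: "s \<in> S" "w = g' s" by blast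
      then have "w = P (h s)" using Ph by simp
      moreover have "h s \<in> carrier G" using h H_carrier by blast
      ultimately show "w \<in> carrier (Zfree (\<theta> ` C))" using hom_in_carrier[OF Phom] by simp
    qed
    have li: "lin_indep (Zfree (\<theta> ` C)) (g' ` S)"
      unfolding ptw.lin_indep_iff[OF ptw_Zfree finite_imageI[OF S(2), of g']]
      using findep_image(2)[OF S(2) fi] subc unfolding cindep_def findep_def by simp
    have "card (g' ` S) = card S" using findep_image(1)[OF S(2) fi] by (simp add: card_image)
    then show "card S \<le> N" using N[OF sub finite_imageI[OF S(2)] li] by simp
  qed
qed

theorem theorem4:
  fixes G :: "('a, 'b) monoid_scheme"
  assumes "comm_group G"
    and "torsionless G"
    and "\<exists>H. subgroup H G \<and> \<not> finite_rank G H \<and> binds G H"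
  shows "\<exists>G' f. subgroup G' Zomega \<and> f \<in> hom G Zomega \<and> f ` carrier G = G' \<and>
           binds (Zomega\<lparr>carrier := G' <#>\<^bsub>Zomega\<^esub> Zomega_fin\<rparr>) Zomega_fin"
proof -
  obtain H where H: "subgroup H G" "\<not> finite_rank G H" "binds G H" using assms(3) by blast
  obtain I :: "'a set" and e where e: "e \<in> hom G (Zprod I)" "inj_on e (carrier G)"
    using assms(2) unfolding torsionless_def by blast
  have ts: "tsetup G I e H" by (rule tsetup.intro[OF assms(1) e H(1)])
  interpret tsetup G I e H by (rule ts)
  have ir: "inf_rank (e ` H)" by (rule inf_rank_H[OF H(2)])
  obtain x F where xF: "\<forall>k::nat. x k \<in> e ` H \<and> lin (F k) \<and> F k (x k) \<noteq> 0 \<and> (\<forall>j. j \<noteq> k \<longrightarrow> F k (x j) = 0)"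
    using biorth_seq[OF closedB_H ir] by (elim exE) (rule that)
  have infa: "infinite (UNIV :: 'a set)"
  proof
    assume "finite (UNIV :: 'a set)"
    then have fH: "finite H" by (rule finite_subset[rotated]) simp
    have "finite_rank G H" unfolding finite_rank_def
      by (rule exI[of _ "card H"]) (use fH in \<open>auto intro: card_mono\<close>)
    then show False using H(2) by simp
  qed
  define f where "f = (\<lambda>g n. F n (e g))"
  define G' where "G' = f ` carrier G"
  have linF: "\<And>n. lin (F n)" using xF by blast
  have fhom: "f \<in> hom G Zomega"
    unfolding hom_def
  proof (intro CollectI conjI ballI funcsetI)
    fix g assume "g \<in> carrier G"
    show "f g \<in> carrier Zomega" by simp
  next
    fix g h assume g: "g \<in> carrier G" and h: "h \<in> carrier G"
    show "f (g \<otimes>\<^bsub>G\<^esub> h) = f g \<otimes>\<^bsub>Zomega\<^esub> f h"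
      using e_mult[OF g h] linD[OF linF, of _ 1 _ 1] by (simp add: f_def)
  qed
  have gZo: "group Zomega" using ptw.cg[OF ptw_Zprod] by (rule comm_group.axioms(2))
  have "group_hom G Zomega f"
    unfolding group_hom_def group_hom_axioms_def using gG gZo fhom by blast
  then have sgG': "subgroup G' Zomega" unfolding G'_def by (rule group_hom.img_is_subgroup)
  have "binds (Zomega\<lparr>carrier := G' <#>\<^bsub>Zomega\<^esub> Zomega_fin\<rparr>) Zomega_fin"
  proof (rule binds_main[OF ts H(3) infa, of x F])
    show "\<And>k. x k \<in> e ` H \<and> lin (F k) \<and> F k (x k) \<noteq> 0 \<and> (\<forall>j. j \<noteq> k \<longrightarrow> F k (x j) = 0)"
      using xF by blast
    show "G' = (\<lambda>g n. F n (e g)) ` carrier G" by (simp add: G'_def f_def)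
  qed
  then show ?thesis using sgG' fhom G'_def by blast
qed

end
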